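(* Let $A$ be a commutative ring and $\sigma$ a hereditary torsion theory on $A$-modules. If $A$ is totally $\sigma$-artinian, then every finitely generated $A$-module is totally $\sigma$-artinian.
   Context: $\mathcal{L}(\sigma)$ is the Gabriel filter of $\sigma$. An $A$-module $M$ is totally $\sigma$-artinian if for every descending chain of submodules $N_1\supseteq N_2\supseteq\cdots$ there exist $m$ and $\mathfrak{h}\in\mathcal{L}(\sigma)$ with $N_m\mathfrak{h}\subseteq N_s$ for all $s\ge m$; the ring $A$ is totally $\sigma$-artinian if $A$ is so as an $A$-module. *)

theory Defs
  imports "HOL-Algebra.Algebra"
begin

definition colon_ideal :: "('a, 'm) ring_scheme \<Rightarrow> 'a set \<Rightarrow> 'a \<Rightarrow> 'a set" where
  "colon_ideal R I a = {r \<in> carrier R. r \<otimes>\<^bsub>R\<^esub> a \<in> I}"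

(* Gabriel filter (Gabriel topology) of ideals of a commutative ring R;
   these correspond bijectively to hereditary torsion theories sigma,
   via sigma \<mapsto> L(sigma). *)
definition gabriel_filter :: "('a, 'm) ring_scheme \<Rightarrow> 'a set set \<Rightarrow> bool" where
  "gabriel_filter R F \<longleftrightarrow>
     (\<forall>I\<in>F. ideal I R) \<and>
     carrier R \<in> F \<and>
     (\<forall>I J. I \<in> F \<and> ideal J R \<and> I \<subseteq> J \<longrightarrow> J \<in> F) \<and>
     (\<forall>I J. I \<in> F \<and> J \<in> F \<longrightarrow> I \<inter> J \<in> F) \<and>
     (\<forall>I\<in>F. \<forall>a\<in>carrier R. colon_ideal R I a \<in> F) \<and>
     (\<forall>I J. ideal I R \<and> J \<in> F \<and> (\<forall>a\<in>J. colon_ideal R I a \<in> F) \<longrightarrow> I \<in> F)"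

definition gen_submodule :: "('a, 'n) ring_scheme \<Rightarrow> ('a, 'b, 'm) module_scheme \<Rightarrow> 'b set \<Rightarrow> 'b set" where
  "gen_submodule R M S = \<Inter> {P. submodule P R M \<and> S \<subseteq> P}"

definition submod_ideal_prod :: "('a, 'n) ring_scheme \<Rightarrow> ('a, 'b, 'm) module_scheme \<Rightarrow> 'b set \<Rightarrow> 'a set \<Rightarrow> 'b set" where
  "submod_ideal_prod R M N h = gen_submodule R M {a \<odot>\<^bsub>M\<^esub> x | a x. a \<in> h \<and> x \<in> N}"

definition finitely_generated_module :: "('a, 'n) ring_scheme \<Rightarrow> ('a, 'b, 'm) module_scheme \<Rightarrow> bool" where
  "finitely_generated_module R M \<longleftrightarrow>
     (\<exists>S. finite S \<and> S \<subseteq> carrier M \<and> gen_submodule R M S = carrier M)"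

definition totally_sigma_artinian ::
  "('a, 'n) ring_scheme \<Rightarrow> 'a set set \<Rightarrow> ('a, 'b, 'm) module_scheme \<Rightarrow> bool" where
  "totally_sigma_artinian R F M \<longleftrightarrow>
     (\<forall>N :: nat \<Rightarrow> 'b set. (\<forall>n. submodule (N n) R M) \<and> (\<forall>n. N (Suc n) \<subseteq> N n) \<longrightarrow>
        (\<exists>m. \<exists>h\<in>F. \<forall>s\<ge>m. submod_ideal_prod R M (N m) h \<subseteq> N s))"

definition ring_as_module :: "('a, 'm) ring_scheme \<Rightarrow> ('a, 'a) module" where
  "ring_as_module R = \<lparr>carrier = carrier R, monoid.mult = monoid.mult R, monoid.one = monoid.one R,
                        ring.zero = ring.zero R, ring.add = ring.add R, smult = monoid.mult R\<rparr>"

end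

theory Submission
  imports Defs
begin


lemma (in abelian_group) neg_cancel1: "p \<in> carrier G \<Longrightarrow> q \<in> carrier G \<Longrightarrow> p \<oplus> (\<ominus> p \<oplus> q) = q"
  by (simp add: a_assoc[symmetric] r_neg)
lemma (in abelian_group) neg_cancel2: "p \<in> carrier G \<Longrightarrow> q \<in> carrier G \<Longrightarrow> \<ominus> p \<oplus> (p \<oplus> q) = q"
  by (simp add: a_assoc[symmetric] l_neg)

lemma gab_ideal: "gabriel_filter R F \<Longrightarrow> I \<in> F \<Longrightarrow> ideal I R"
  unfolding gabriel_filter_def by (elim conjE) (erule bspec)
lemma gab_carrier: "gabriel_filter R F \<Longrightarrow> carrier R \<in> F"
  unfolding gabriel_filter_def by blast
lemma gab_up: "gabriel_filter R F \<Longrightarrow> I \<in> F \<Longrightarrow> ideal J R \<Longrightarrow> I \<subseteq> J \<Longrightarrow> J \<in> F"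
  unfolding gabriel_filter_def by blast
lemma gab_last:
  assumes "gabriel_filter R F" "ideal I R" "J \<in> F" "\<And>a. a \<in> J \<Longrightarrow> colon_ideal R I a \<in> F"
  shows "I \<in> F"
proof -
  have "\<forall>I J. ideal I R \<and> J \<in> F \<and> (\<forall>a\<in>J. colon_ideal R I a \<in> F) \<longrightarrow> I \<in> F"
    using assms(1) unfolding gabriel_filter_def by (elim conjE) assumption
  then show ?thesis using assms(2-4) by blast
qed

lemma (in cring) colon_ideal_ideal:
  assumes H: "ideal H R" and a: "a \<in> carrier R"
  shows "ideal (colon_ideal R H a) R"
proof -
  interpret I: ideal H R by fact
  show ?thesis
  proof (rule idealI)
    show "ring R" by (rule ring_axioms)
    show "subgroup (colon_ideal R H a) (add_monoid R)"
    proof (rule add.subgroupI)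
      show "colon_ideal R H a \<subseteq> carrier R" by (auto simp: colon_ideal_def)
      have "\<zero> \<in> colon_ideal R H a" using a additive_subgroup.zero_closed[OF I.additive_subgroup_axioms]
        by (simp add: colon_ideal_def)
      then show "colon_ideal R H a \<noteq> {}" by blast
      fix r assume "r \<in> colon_ideal R H a"
      then show "\<ominus> r \<in> colon_ideal R H a" using a
        by (auto simp: colon_ideal_def l_minus I.a_inv_closed)
    next
      fix r s assume "r \<in> colon_ideal R H a" "s \<in> colon_ideal R H a"
      then show "r \<oplus> s \<in> colon_ideal R H a" using a
        by (auto simp: colon_ideal_def l_distr I.a_closed)
    qed
  next
    fix r x assume "r \<in> colon_ideal R H a" "x \<in> carrier R"
    then have r: "r \<in> carrier R" "r \<otimes> a \<in> H" and x: "x \<in> carrier R" by (auto simp: colon_ideal_def)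
    have "(x \<otimes> r) \<otimes> a = x \<otimes> (r \<otimes> a)" using r x a by (simp add: m_assoc)
    then have 1: "x \<otimes> r \<in> colon_ideal R H a" using r x a I.I_l_closed by (simp add: colon_ideal_def)
    then show "x \<otimes> r \<in> colon_ideal R H a" .
    show "r \<otimes> x \<in> colon_ideal R H a" using 1 r x by (simp add: m_comm)
  qed
qed


context module
begin

lemma gen_sup: "S \<subseteq> gen_submodule R M S"
  by (auto simp: gen_submodule_def)

lemma gen_least: "submodule P R M \<Longrightarrow> S \<subseteq> P \<Longrightarrow> gen_submodule R M S \<subseteq> P"
  by (auto simp: gen_submodule_def)

lemma gen_sub:
  assumes S: "S \<subseteq> carrier M"
  shows "submodule (gen_submodule R M S) R M"
proof (rule submoduleI)
  let ?G = "gen_submodule R M S"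
  show "?G \<subseteq> carrier M" using gen_least[OF carrier_is_submodule S] .
  show "\<zero>\<^bsub>M\<^esub> \<in> ?G" unfolding gen_submodule_def
    using submodule.axioms(1) subgroup.one_closed by fastforce
  show "\<ominus>\<^bsub>M\<^esub> a \<in> ?G" if "a \<in> ?G" for a
    using that submoduleE(3) unfolding gen_submodule_def by blast
  show "a \<oplus>\<^bsub>M\<^esub> b \<in> ?G" if "a \<in> ?G" "b \<in> ?G" for a b
    using that submoduleE(5) unfolding gen_submodule_def by blast
  show "a \<odot>\<^bsub>M\<^esub> x \<in> ?G" if "a \<in> carrier R" "x \<in> ?G" for a x
    using that submoduleE(4) unfolding gen_submodule_def by blast
qed

lemma sub_zero: "submodule P R M \<Longrightarrow> \<zero>\<^bsub>M\<^esub> \<in> P"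
  using submodule.axioms(1) subgroup.one_closed by fastforce

lemma sub_int: "submodule P R M \<Longrightarrow> submodule Q R M \<Longrightarrow> submodule (P \<inter> Q) R M"
  apply (rule submoduleI)
  using submoduleE sub_zero by auto

end

lemma (in cring) ideal_sub:
  assumes "I \<subseteq> carrier R" "\<zero> \<in> I" "\<And>a. a\<in>I \<Longrightarrow> \<ominus>a \<in> I" "\<And>a b. a\<in>I \<Longrightarrow> b\<in>I \<Longrightarrow> a\<oplus>b\<in>I"
    "\<And>a b. a\<in>carrier R \<Longrightarrow> b\<in>I \<Longrightarrow> a\<otimes>b \<in> I"
  shows "submodule I R (ring_as_module R)"
proof -
  have inv: "m_inv (add_monoid (ring_as_module R)) a = \<ominus> a" for a
    unfolding m_inv_def a_inv_def by (simp add: ring_as_module_def)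
  show ?thesis
    unfolding submodule_def submodule_axioms_def subgroup_def inv
    using assms by (auto simp: ring_as_module_def)
qed

context module
begin

lemma span_insert:
  assumes S: "S \<subseteq> carrier M" and x: "x \<in> carrier M"
  shows "gen_submodule R M (insert x S) \<subseteq>
    {p \<oplus>\<^bsub>M\<^esub> r \<odot>\<^bsub>M\<^esub> x | p r. p \<in> gen_submodule R M S \<and> r \<in> carrier R}"
    (is "_ \<subseteq> ?Q")
proof (rule gen_least)
  let ?P = "gen_submodule R M S"
  have P: "submodule ?P R M" by (rule gen_sub[OF S])
  have Pc: "?P \<subseteq> carrier M" using submoduleE(1)[OF P] .
  show "submodule ?Q R M"
  proof (rule submoduleI)
    show "?Q \<subseteq> carrier M" using Pc x by auto
    show "\<zero>\<^bsub>M\<^esub> \<in> ?Q"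
      using sub_zero[OF P] x by (auto intro!: exI[of _ "\<zero>\<^bsub>M\<^esub>"] exI[of _ "\<zero>"])
    show "\<ominus>\<^bsub>M\<^esub> a \<in> ?Q" if aQ: "a \<in> ?Q" for a
    proof -
      obtain p r where a: "a = p \<oplus>\<^bsub>M\<^esub> r \<odot>\<^bsub>M\<^esub> x" "p \<in> ?P" "r \<in> carrier R" using aQ by blast
      have pc: "p \<in> carrier M" using a Pc by auto
      have "\<ominus>\<^bsub>M\<^esub> a = (\<ominus>\<^bsub>M\<^esub> p) \<oplus>\<^bsub>M\<^esub> (\<ominus> r) \<odot>\<^bsub>M\<^esub> x"
        using a pc x by (simp add: smult_l_minus M.minus_add)
      then show ?thesis using a submoduleE(3)[OF P] by blast
    qed
    show "a \<oplus>\<^bsub>M\<^esub> b \<in> ?Q" if aQ: "a \<in> ?Q" "b \<in> ?Q" for a b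
    proof -
      obtain p r where a: "a = p \<oplus>\<^bsub>M\<^esub> r \<odot>\<^bsub>M\<^esub> x" "p \<in> ?P" "r \<in> carrier R" using aQ by blast
      obtain q t where b: "b = q \<oplus>\<^bsub>M\<^esub> t \<odot>\<^bsub>M\<^esub> x" "q \<in> ?P" "t \<in> carrier R" using aQ by blast
      have pc: "p \<in> carrier M" "q \<in> carrier M" using a b Pc by auto
      have "a \<oplus>\<^bsub>M\<^esub> b = (p \<oplus>\<^bsub>M\<^esub> q) \<oplus>\<^bsub>M\<^esub> (r \<oplus> t) \<odot>\<^bsub>M\<^esub> x"
        using a b pc x by (simp add: smult_l_distr M.a_ac)
      then show ?thesis using a b submoduleE(5)[OF P] by blast
    qed
    show "c \<odot>\<^bsub>M\<^esub> a \<in> ?Q" if aQ: "c \<in> carrier R" "a \<in> ?Q" for c a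
    proof -
      obtain p r where a: "a = p \<oplus>\<^bsub>M\<^esub> r \<odot>\<^bsub>M\<^esub> x" "p \<in> ?P" "r \<in> carrier R" using aQ by blast
      have pc: "p \<in> carrier M" using a Pc by auto
      have "c \<odot>\<^bsub>M\<^esub> a = (c \<odot>\<^bsub>M\<^esub> p) \<oplus>\<^bsub>M\<^esub> (c \<otimes> r) \<odot>\<^bsub>M\<^esub> x"
        using a pc x aQ by (simp add: smult_r_distr smult_assoc1)
      then show ?thesis using a aQ submoduleE(4)[OF P] by blast
    qed
  qed
  show "insert x S \<subseteq> ?Q"
  proof
    fix y assume "y \<in> insert x S"
    then show "y \<in> ?Q"
    proof
      assume "y = x"
      then have "y = \<zero>\<^bsub>M\<^esub> \<oplus>\<^bsub>M\<^esub> \<one> \<odot>\<^bsub>M\<^esub> x" using x by simp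
      then show ?thesis using sub_zero[OF P] by blast
    next
      assume "y \<in> S"
      then have "y = y \<oplus>\<^bsub>M\<^esub> \<zero> \<odot>\<^bsub>M\<^esub> x" "y \<in> ?P" using x S gen_sup by auto
      then show ?thesis by blast
    qed
  qed
qed

end


context module
begin

lemma key:
  assumes gab: "gabriel_filter R F"
    and art: "\<And>I. (\<forall>n. submodule (I n) R (ring_as_module R)) \<Longrightarrow> (\<forall>n. I (Suc n) \<subseteq> I n) \<Longrightarrow>
       \<exists>m. \<exists>h\<in>F. \<forall>s\<ge>m. \<forall>a\<in>h. \<forall>r\<in>I m. a \<otimes> r \<in> I s"
    and fin: "finite S"
  shows "S \<subseteq> carrier M \<Longrightarrow> (\<forall>n. submodule (N n) R M) \<Longrightarrow> (\<forall>n. N (Suc n) \<subseteq> N n) \<Longrightarrow>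
    (\<forall>n. N n \<subseteq> gen_submodule R M S) \<Longrightarrow>
    \<exists>m. \<exists>h\<in>F. \<forall>s\<ge>m. \<forall>a\<in>h. \<forall>y\<in>N m. a \<odot>\<^bsub>M\<^esub> y \<in> N s"
  using fin
proof (induction S arbitrary: N rule: finite_induct)
  case empty
  have "submodule {\<zero>\<^bsub>M\<^esub>} R M" by (rule submoduleI) auto
  then have "gen_submodule R M {} \<subseteq> {\<zero>\<^bsub>M\<^esub>}" by (rule gen_least) auto
  then have "\<forall>s\<ge>0. \<forall>a\<in>carrier R. \<forall>y\<in>N 0. a \<odot>\<^bsub>M\<^esub> y \<in> N s"
    using empty sub_zero by fastforce
  moreover have "carrier R \<in> F" using gab by (rule gab_carrier)
  ultimately show ?case by blast
next
  case (insert x S N)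
  let ?P = "gen_submodule R M S"
  have x: "x \<in> carrier M" and S: "S \<subseteq> carrier M" using insert.prems by auto
  have P: "submodule ?P R M" by (rule gen_sub[OF S])
  have Pc: "?P \<subseteq> carrier M" using submoduleE(1)[OF P] .
  have Nsub: "\<And>n. submodule (N n) R M" using insert.prems by auto
  have Nc: "\<And>n. N n \<subseteq> carrier M" using submoduleE(1)[OF Nsub] .
  have Ncy: "\<And>n y. y \<in> N n \<Longrightarrow> y \<in> carrier M" using Nc by blast
  have Nmono: "N n' \<subseteq> N n" if "n \<le> n'" for n n'
    using lift_Suc_antimono_le[of N, OF _ that] insert.prems by auto
  have span: "\<And>y. y \<in> N n \<Longrightarrow> \<exists>p r. y = p \<oplus>\<^bsub>M\<^esub> r \<odot>\<^bsub>M\<^esub> x \<and> p \<in> ?P \<and> r \<in> carrier R" for n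
    using span_insert[OF S x] insert.prems by blast
  define I where "I n = {r \<in> carrier R. \<exists>y\<in>N n. \<exists>p\<in>?P. r \<odot>\<^bsub>M\<^esub> x = y \<oplus>\<^bsub>M\<^esub> p}" for n
  have Isub: "submodule (I n) R (ring_as_module R)" for n
  proof (rule ideal_sub)
    show "I n \<subseteq> carrier R" by (auto simp: I_def)
    show "\<zero> \<in> I n" unfolding I_def using x sub_zero[OF P] sub_zero[OF Nsub]
      by (auto intro!: bexI[of _ "\<zero>\<^bsub>M\<^esub>"])
    show "\<ominus> a \<in> I n" if A: "a \<in> I n" for a
    proof -
      obtain y p where a: "a \<in> carrier R" "y \<in> N n" "p \<in> ?P" "a \<odot>\<^bsub>M\<^esub> x = y \<oplus>\<^bsub>M\<^esub> p"
        using A by (auto simp: I_def)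
      have "(\<ominus> a) \<odot>\<^bsub>M\<^esub> x = (\<ominus>\<^bsub>M\<^esub> y) \<oplus>\<^bsub>M\<^esub> (\<ominus>\<^bsub>M\<^esub> p)"
        using a x Nc Pc subsetD[OF Nc] subsetD[OF Pc] by (simp add: smult_l_minus M.minus_add)
      moreover have "\<ominus>\<^bsub>M\<^esub> y \<in> N n" "\<ominus>\<^bsub>M\<^esub> p \<in> ?P"
        using a submoduleE(3)[OF P] submoduleE(3)[OF Nsub] by auto
      ultimately show ?thesis using a unfolding I_def by blast
    qed
    show "a \<oplus> b \<in> I n" if A: "a \<in> I n" "b \<in> I n" for a b
    proof -
      obtain y p where a: "a \<in> carrier R" "y \<in> N n" "p \<in> ?P" "a \<odot>\<^bsub>M\<^esub> x = y \<oplus>\<^bsub>M\<^esub> p"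
        using A by (auto simp: I_def)
      obtain y' p' where b: "b \<in> carrier R" "y' \<in> N n" "p' \<in> ?P" "b \<odot>\<^bsub>M\<^esub> x = y' \<oplus>\<^bsub>M\<^esub> p'"
        using A by (auto simp: I_def)
      have c: "y \<in> carrier M" "p \<in> carrier M" "y' \<in> carrier M" "p' \<in> carrier M"
        using a b Nc Pc by auto
      have "(a \<oplus> b) \<odot>\<^bsub>M\<^esub> x = (y \<oplus>\<^bsub>M\<^esub> y') \<oplus>\<^bsub>M\<^esub> (p \<oplus>\<^bsub>M\<^esub> p')"
        using a b x c by (simp add: smult_l_distr M.a_ac)
      moreover have "y \<oplus>\<^bsub>M\<^esub> y' \<in> N n" "p \<oplus>\<^bsub>M\<^esub> p' \<in> ?P"
        using a b submoduleE(5)[OF P] submoduleE(5)[OF Nsub] by auto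
      ultimately show ?thesis using a b unfolding I_def by blast
    qed
    show "a \<otimes> b \<in> I n" if A: "a \<in> carrier R" "b \<in> I n" for a b
    proof -
      obtain y p where b: "b \<in> carrier R" "y \<in> N n" "p \<in> ?P" "b \<odot>\<^bsub>M\<^esub> x = y \<oplus>\<^bsub>M\<^esub> p"
        using A by (auto simp: I_def)
      have c: "y \<in> carrier M" "p \<in> carrier M" using b Nc Pc by auto
      have "(a \<otimes> b) \<odot>\<^bsub>M\<^esub> x = (a \<odot>\<^bsub>M\<^esub> y) \<oplus>\<^bsub>M\<^esub> (a \<odot>\<^bsub>M\<^esub> p)"
        using A b x c by (simp add: smult_assoc1 smult_r_distr)
      moreover have "a \<odot>\<^bsub>M\<^esub> y \<in> N n" "a \<odot>\<^bsub>M\<^esub> p \<in> ?P"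
        using A b submoduleE(4)[OF P] submoduleE(4)[OF Nsub] by auto
      ultimately show ?thesis using A b unfolding I_def by blast
    qed
  qed
  have Idesc: "I (Suc n) \<subseteq> I n" for n
    using Nmono[of n "Suc n"] by (auto simp: I_def)
  obtain m1 h1 where h1: "h1 \<in> F" and m1: "\<forall>s\<ge>m1. \<forall>a\<in>h1. \<forall>r\<in>I m1. a \<otimes> r \<in> I s"
    using art[of I] Isub Idesc by blast
  have "\<exists>m. \<exists>h\<in>F. \<forall>s\<ge>m. \<forall>a\<in>h. \<forall>y\<in>N m \<inter> ?P. a \<odot>\<^bsub>M\<^esub> y \<in> N s \<inter> ?P"
  proof (rule insert.IH[of "\<lambda>n. N n \<inter> ?P"])
    show "S \<subseteq> carrier M" by (rule S)
    show "\<forall>n. submodule (N n \<inter> ?P) R M" using sub_int[OF Nsub P] by blast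
    show "\<forall>n. N (Suc n) \<inter> ?P \<subseteq> N n \<inter> ?P" using insert.prems(3) by auto
    show "\<forall>n. N n \<inter> ?P \<subseteq> ?P" by blast
  qed
  then obtain m2 h2 where h2: "h2 \<in> F" and m2: "\<forall>s\<ge>m2. \<forall>a\<in>h2. \<forall>y\<in>N m2 \<inter> ?P. a \<odot>\<^bsub>M\<^esub> y \<in> N s \<inter> ?P"
    by blast
  define k where "k = max m1 m2"
  define H where "H = {c \<in> carrier R. \<forall>s\<ge>k. \<forall>y\<in>N k. c \<odot>\<^bsub>M\<^esub> y \<in> N s}"
  have Hideal: "ideal H R"
  proof (rule idealI)
    show "ring R" by (rule R.ring_axioms)
    show "subgroup H (add_monoid R)"
    proof (rule R.add.subgroupI)
      show "H \<subseteq> carrier R" by (auto simp: H_def)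
      have "\<zero> \<in> H" unfolding H_def using sub_zero[OF Nsub] Ncy by auto
      then show "H \<noteq> {}" by blast
      show "\<ominus> a \<in> H" if A: "a \<in> H" for a
      proof -
        have "(\<ominus> a) \<odot>\<^bsub>M\<^esub> y \<in> N s" if "s \<ge> k" "y \<in> N k" for s y
          using A that smult_l_minus[of a y] Ncy[of y k] submoduleE(3)[OF Nsub] unfolding H_def by auto
        then show ?thesis using A unfolding H_def by auto
      qed
      show "a \<oplus> b \<in> H" if A: "a \<in> H" "b \<in> H" for a b
      proof -
        have "(a \<oplus> b) \<odot>\<^bsub>M\<^esub> y \<in> N s" if "s \<ge> k" "y \<in> N k" for s y
          using A that smult_l_distr[of a b y] Ncy[of y k] submoduleE(5)[OF Nsub] unfolding H_def by auto
        then show ?thesis using A unfolding H_def by auto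
      qed
    qed
    show lc: "x' \<otimes> a \<in> H" if A: "a \<in> H" "x' \<in> carrier R" for a x'
    proof -
      have "(x' \<otimes> a) \<odot>\<^bsub>M\<^esub> y \<in> N s" if "s \<ge> k" "y \<in> N k" for s y
        using A that smult_assoc1[of x' a y] Ncy[of y k] submoduleE(4)[OF Nsub] unfolding H_def by auto
      then show ?thesis using A unfolding H_def by auto
    qed
    show "a \<otimes> x' \<in> H" if A: "a \<in> H" "x' \<in> carrier R" for a x'
    proof -
      have "a \<in> carrier R" using A unfolding H_def by blast
      then have "a \<otimes> x' = x' \<otimes> a" using A(2) by (rule R.m_comm)
      then show ?thesis using lc[OF A] by simp
    qed
  qed
  have h1c: "h1 \<subseteq> carrier R" and h2c: "h2 \<subseteq> carrier R"
  proof -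
    have i1: "ideal h1 R" using gab h1 by (rule gab_ideal)
    have i2: "ideal h2 R" using gab h2 by (rule gab_ideal)
    show "h1 \<subseteq> carrier R" using ideal.Icarr[OF i1] by blast
    show "h2 \<subseteq> carrier R" using ideal.Icarr[OF i2] by blast
  qed
  have main: "b \<otimes> a \<in> H" if a: "a \<in> h1" and b: "b \<in> h2" for a b
  proof -
    have ac: "a \<in> carrier R" and bc: "b \<in> carrier R" using a b h1c h2c by auto
    have "(b \<otimes> a) \<odot>\<^bsub>M\<^esub> y \<in> N s" if s: "s \<ge> k" and y: "y \<in> N k" for s y
    proof -
      obtain p r where yp: "y = p \<oplus>\<^bsub>M\<^esub> r \<odot>\<^bsub>M\<^esub> x" "p \<in> ?P" "r \<in> carrier R"
        using span[OF y] by blast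
      have pc: "p \<in> carrier M" "y \<in> carrier M" using yp y Pc Nc by auto
      have "r \<odot>\<^bsub>M\<^esub> x = y \<oplus>\<^bsub>M\<^esub> (\<ominus>\<^bsub>M\<^esub> p)"
        unfolding yp(1) using pc x yp(3) by (metis M.a_assoc M.a_comm M.a_inv_closed M.r_neg M.r_zero smult_closed)
      then have "r \<in> I k" using yp y submoduleE(3)[OF P] by (auto simp: I_def)
      then have "r \<in> I m1" using Nmono[of m1 k] by (auto simp: I_def k_def)
      then have "a \<otimes> r \<in> I s" using m1 a s by (auto simp: k_def)
      then obtain y' p' where y': "y' \<in> N s" "p' \<in> ?P" "(a \<otimes> r) \<odot>\<^bsub>M\<^esub> x = y' \<oplus>\<^bsub>M\<^esub> p'"
        by (auto simp: I_def)
      have c': "y' \<in> carrier M" "p' \<in> carrier M" using y' Nc Pc by auto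
      define z where "z = a \<odot>\<^bsub>M\<^esub> y \<oplus>\<^bsub>M\<^esub> (\<ominus>\<^bsub>M\<^esub> y')"
      have ay: "a \<odot>\<^bsub>M\<^esub> y = a \<odot>\<^bsub>M\<^esub> p \<oplus>\<^bsub>M\<^esub> (y' \<oplus>\<^bsub>M\<^esub> p')"
        using yp ac pc x y' by (simp add: smult_r_distr smult_assoc1[symmetric])
      have "z = a \<odot>\<^bsub>M\<^esub> p \<oplus>\<^bsub>M\<^esub> p'"
        unfolding z_def ay using ac pc c' by (simp add: M.a_ac M.neg_cancel1 M.neg_cancel2)
      then have zP: "z \<in> ?P" using submoduleE(4,5)[OF P] ac yp y' by auto
      have "y' \<in> N k" using y' Nmono[OF s] by auto
      then have zN: "z \<in> N k" unfolding z_def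
        using submoduleE(3,4,5)[OF Nsub] ac y by auto
      then have "z \<in> N m2" using Nmono[of m2 k] by (auto simp: k_def)
      then have bz: "b \<odot>\<^bsub>M\<^esub> z \<in> N s" using m2 b zP s by (auto simp: k_def)
      have zc: "z \<in> carrier M" using zP Pc by auto
      have "a \<odot>\<^bsub>M\<^esub> y = z \<oplus>\<^bsub>M\<^esub> y'" unfolding z_def using ac pc c'
        by (simp add: M.a_ac M.neg_cancel1 M.neg_cancel2)
      then have "(b \<otimes> a) \<odot>\<^bsub>M\<^esub> y = b \<odot>\<^bsub>M\<^esub> z \<oplus>\<^bsub>M\<^esub> b \<odot>\<^bsub>M\<^esub> y'"
        using ac bc pc zc c' by (simp add: smult_assoc1 smult_r_distr)
      then show ?thesis using bz y' bc submoduleE(4,5)[OF Nsub] by auto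
    qed
    then show ?thesis using ac bc by (auto simp: H_def)
  qed
  have "H \<in> F"
  proof (rule gab_last[OF gab Hideal h1])
    fix a assume a: "a \<in> h1"
    have ac: "a \<in> carrier R" using a h1c by blast
    have sub: "h2 \<subseteq> colon_ideal R H a"
    proof
      fix b assume b: "b \<in> h2"
      have "b \<in> carrier R" using b h2c by blast
      then show "b \<in> colon_ideal R H a" unfolding colon_ideal_def using main[OF a b] by blast
    qed
    have "ideal (colon_ideal R H a) R" using colon_ideal_ideal[OF Hideal ac] .
    then show "colon_ideal R H a \<in> F" using gab_up[OF gab h2 _ sub] by blast
  qed
  moreover have "\<forall>s\<ge>k. \<forall>a\<in>H. \<forall>y\<in>N k. a \<odot>\<^bsub>M\<^esub> y \<in> N s"
    unfolding H_def by blast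
  ultimately show ?case by (intro exI[of _ k] bexI[of _ H])
qed

end


theorem mainTheorem12:
  fixes R :: "('a, 'n) ring_scheme" and F :: "'a set set"
    and M :: "('a, 'b, 'm) module_scheme"
  assumes "cring R"
    and "gabriel_filter R F"
    and "totally_sigma_artinian R F (ring_as_module R)"
    and "module R M"
    and "finitely_generated_module R M"
  shows "totally_sigma_artinian R F M"
proof -
  interpret module R M by fact
  have art: "\<exists>m. \<exists>h\<in>F. \<forall>s\<ge>m. \<forall>a\<in>h. \<forall>r\<in>I m. a \<otimes>\<^bsub>R\<^esub> r \<in> I s"
    if IA: "\<forall>n. submodule (I n) R (ring_as_module R)" "\<forall>n. I (Suc n) \<subseteq> I n" for I
  proof -
    have "\<exists>m. \<exists>h\<in>F. \<forall>s\<ge>m. submod_ideal_prod R (ring_as_module R) (I m) h \<subseteq> I s"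
      using assms(3) IA unfolding totally_sigma_artinian_def by (elim allE[of _ I]) simp
    then obtain m h where h: "h \<in> F" and mh: "\<forall>s\<ge>m. submod_ideal_prod R (ring_as_module R) (I m) h \<subseteq> I s"
      by blast
    have "a \<otimes>\<^bsub>R\<^esub> r \<in> I s" if s: "s \<ge> m" and a: "a \<in> h" and r: "r \<in> I m" for s a r
    proof -
      have "a \<odot>\<^bsub>ring_as_module R\<^esub> r \<in> {a \<odot>\<^bsub>ring_as_module R\<^esub> x | a x. a \<in> h \<and> x \<in> I m}"
        using a r by blast
      then have "a \<odot>\<^bsub>ring_as_module R\<^esub> r \<in> submod_ideal_prod R (ring_as_module R) (I m) h"
        unfolding submod_ideal_prod_def gen_submodule_def by blast
      then have "a \<odot>\<^bsub>ring_as_module R\<^esub> r \<in> I s" using mh s by blast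
      then show ?thesis by (simp add: ring_as_module_def)
    qed
    then show ?thesis using h by blast
  qed
  obtain S where S: "finite S" "S \<subseteq> carrier M" "gen_submodule R M S = carrier M"
    using assms(5) unfolding finitely_generated_module_def by blast
  show ?thesis unfolding totally_sigma_artinian_def
  proof (intro allI impI)
    fix N :: "nat \<Rightarrow> 'b set"
    assume N: "(\<forall>n. submodule (N n) R M) \<and> (\<forall>n. N (Suc n) \<subseteq> N n)"
    have Ns: "\<And>n. submodule (N n) R M" using N by blast
    have "\<forall>n. N n \<subseteq> gen_submodule R M S" using Ns S(3) submoduleE(1) by auto
    then have "\<exists>m. \<exists>h\<in>F. \<forall>s\<ge>m. \<forall>a\<in>h. \<forall>y\<in>N m. a \<odot>\<^bsub>M\<^esub> y \<in> N s"
      using key[OF assms(2) art S(1) S(2)] N by blast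
    then obtain m h where h: "h \<in> F" and mh: "\<forall>s\<ge>m. \<forall>a\<in>h. \<forall>y\<in>N m. a \<odot>\<^bsub>M\<^esub> y \<in> N s"
      by blast
    have "submod_ideal_prod R M (N m) h \<subseteq> N s" if s: "s \<ge> m" for s
    proof -
      have "{a \<odot>\<^bsub>M\<^esub> x | a x. a \<in> h \<and> x \<in> N m} \<subseteq> N s" using mh s by blast
      then show ?thesis unfolding submod_ideal_prod_def by (rule gen_least[OF Ns])
    qed
    then show "\<exists>m. \<exists>h\<in>F. \<forall>s\<ge>m. submod_ideal_prod R M (N m) h \<subseteq> N s" using h by blast
  qed
qed

end
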